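(* Let $s\in\{1,2,3\}$ and let $P\in R$ satisfy $DP=D_1P=D_2P=D_3P=D_4P=0$. Then there exists $Q\in R$ with $\partial_{s4}Q=P$ and $DQ=D_1Q=D_2Q=D_3Q=D_4Q=0$.
   Context: $R=\mathbb C[x_1,x_2,x_3,x_4,x_{12},x_{13},x_{14},x_{23},x_{24},x_{34}]$ (i.e. $\mathrm{Sym}(\mathbb C^4)\otimes\mathrm{Sym}(\Lambda^2\mathbb C^4)$), $\partial_i=\partial/\partial x_i$, $\partial_{ij}=\partial/\partial x_{ij}$, $D=\partial_{12}\partial_{34}-\partial_{13}\partial_{24}+\partial_{14}\partial_{23}$, $D_1=\partial_{23}\partial_4-\partial_{24}\partial_3+\partial_{34}\partial_2$, $D_2=\partial_{13}\partial_4-\partial_{14}\partial_3+\partial_{34}\partial_1$, $D_3=\partial_{12}\partial_4-\partial_{14}\partial_2+\partial_{24}\partial_1$, $D_4=\partial_{12}\partial_3-\partial_{13}\partial_2+\partial_{23}\partial_1$. *)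

theory Defs
  imports Complex_Main
begin

datatype var = X1 | X2 | X3 | X4 | X12 | X13 | X14 | X23 | X24 | X34

text \<open>A polynomial is represented by its coefficient function on monomials
  (exponent vectors var => nat); it is a polynomial iff finitely many
  coefficients are nonzero.\<close>
type_synonym mono = "var \<Rightarrow> nat"
type_synonym cpoly = "mono \<Rightarrow> complex"

definition polys :: "cpoly set" where
  "polys = {p. finite {m. p m \<noteq> 0}}"

definition pd :: "var \<Rightarrow> cpoly \<Rightarrow> cpoly" where
  "pd v p = (\<lambda>m. of_nat (m v + 1) * p (m(v := m v + 1)))"

definition padd :: "cpoly \<Rightarrow> cpoly \<Rightarrow> cpoly" where
  "padd p q = (\<lambda>m. p m + q m)"

definition psub :: "cpoly \<Rightarrow> cpoly \<Rightarrow> cpoly" where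
  "psub p q = (\<lambda>m. p m - q m)"

definition pd2 :: "var \<Rightarrow> var \<Rightarrow> cpoly \<Rightarrow> cpoly" where
  "pd2 a b p = pd a (pd b p)"

definition opD :: "cpoly \<Rightarrow> cpoly" where
  "opD p = padd (psub (pd2 X12 X34 p) (pd2 X13 X24 p)) (pd2 X14 X23 p)"

definition opD1 :: "cpoly \<Rightarrow> cpoly" where
  "opD1 p = padd (psub (pd2 X23 X4 p) (pd2 X24 X3 p)) (pd2 X34 X2 p)"

definition opD2 :: "cpoly \<Rightarrow> cpoly" where
  "opD2 p = padd (psub (pd2 X13 X4 p) (pd2 X14 X3 p)) (pd2 X34 X1 p)"

definition opD3 :: "cpoly \<Rightarrow> cpoly" where
  "opD3 p = padd (psub (pd2 X12 X4 p) (pd2 X14 X2 p)) (pd2 X24 X1 p)"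

definition opD4 :: "cpoly \<Rightarrow> cpoly" where
  "opD4 p = padd (psub (pd2 X12 X3 p) (pd2 X13 X2 p)) (pd2 X23 X1 p)"

definition var_s4 :: "nat \<Rightarrow> var" where
  "var_s4 s = (if s = 1 then X14 else if s = 2 then X24 else X34)"

end

theory Submission
  imports Defs "HOL-Computational_Algebra.Polynomial"
begin

lemma UNIV_var: "(UNIV::var set) = {X1,X2,X3,X4,X12,X13,X14,X23,X24,X34}"
proof -
  { fix x :: var have "x \<in> {X1,X2,X3,X4,X12,X13,X14,X23,X24,X34}" by (cases x) auto }
  thus ?thesis by auto
qed

instance var :: finite
  by standard (simp add: UNIV_var)

definition upd1 :: "var \<Rightarrow> mono \<Rightarrow> mono" where
  "upd1 v m = m(v := m v + 1)"

definition mdeg :: "mono \<Rightarrow> nat" where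
  "mdeg m = (\<Sum>v\<in>UNIV. m v)"

definition Sd :: "nat \<Rightarrow> mono set" where
  "Sd d = {m. mdeg m = d}"

lemma sum_upd1:
  fixes f :: "var \<Rightarrow> 'a::comm_semiring_1"
  shows "(\<Sum>w\<in>UNIV. of_nat (upd1 v m w) * f w) = (\<Sum>w\<in>UNIV. of_nat (m w) * f w) + f v"
proof -
  have "(\<Sum>w\<in>UNIV. of_nat (upd1 v m w) * f w) = (\<Sum>w\<in>UNIV. of_nat (m w) * f w + (if w = v then f v else 0))"
    by (rule sum.cong) (auto simp: upd1_def algebra_simps)
  also have "\<dots> = (\<Sum>w\<in>UNIV. of_nat (m w) * f w) + f v"
    by (simp add: sum.distrib)
  finally show ?thesis .
qed

lemma mdeg_upd1[simp]: "mdeg (upd1 v m) = mdeg m + 1"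
  using sum_upd1[of v m "\<lambda>_. 1::nat"] by (simp add: mdeg_def)

lemma le_mdeg: "m v \<le> mdeg m"
  unfolding mdeg_def by (rule member_le_sum) auto

lemma finite_Sd: "finite (Sd d)"
proof -
  have "Sd d \<subseteq> {f. \<forall>x. (x \<in> UNIV \<longrightarrow> f x \<in> {..d}) \<and> (x \<notin> UNIV \<longrightarrow> f x = 0)}"
    unfolding Sd_def using le_mdeg by auto
  moreover have "finite {f::mono. \<forall>x. (x \<in> UNIV \<longrightarrow> f x \<in> {..d}) \<and> (x \<notin> UNIV \<longrightarrow> f x = 0)}"
    by (rule finite_set_of_finite_funs) auto
  ultimately show ?thesis by (rule finite_subset)
qed

lemma upd1_comm: "upd1 a (upd1 b m) = upd1 b (upd1 a m)"
  unfolding upd1_def by (auto simp: fun_eq_iff)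

lemma upd1_inj: "upd1 v m = upd1 v m' \<Longrightarrow> m = m'"
proof (rule ext)
  fix w assume "upd1 v m = upd1 v m'"
  then have "upd1 v m w = upd1 v m' w" by simp
  then show "m w = m' w" unfolding upd1_def by (cases "w = v") auto
qed

definition fa :: "nat \<Rightarrow> nat \<Rightarrow> var" where
  "fa r k = (if r = 0 then [X12, X13, X14] ! k else if r = 1 then [X23, X24, X34] ! k
     else if r = 2 then [X13, X14, X34] ! k else if r = 3 then [X12, X14, X24] ! k
     else [X12, X13, X23] ! k)"

definition fb :: "nat \<Rightarrow> nat \<Rightarrow> var" where
  "fb r k = (if r = 0 then [X34, X24, X23] ! k else if r = 1 then [X4, X3, X2] ! k
     else if r = 2 then [X4, X3, X1] ! k else if r = 3 then [X4, X2, X1] ! k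
     else [X3, X2, X1] ! k)"

definition eps :: "nat \<Rightarrow> 'a::comm_ring_1" where
  "eps k = (if k = 1 then -1 else 1)"

lemma eps_sq[simp]: "eps k * eps k = 1"
  by (simp add: eps_def)

lemma fa_fb_neq: "r < 5 \<Longrightarrow> k < 3 \<Longrightarrow> fa r k \<noteq> fb r k"
  by (auto simp: fa_def fb_def less_Suc_eq numeral_eq_Suc)

definition sh :: "nat \<Rightarrow> nat \<Rightarrow> mono \<Rightarrow> mono" where
  "sh r k n = upd1 (fb r k) (upd1 (fa r k) n)"

lemma mdeg_sh[simp]: "mdeg (sh r k n) = mdeg n + 2"
  by (simp add: sh_def)

definition gen :: "mono \<Rightarrow> nat \<Rightarrow> cpoly" where
  "gen n r = (\<lambda>m. \<Sum>k<3. eps k * (if m = sh r k n then 1 else 0))"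

inductive_set Jd :: "nat \<Rightarrow> cpoly set" for d where
  Jd0: "(\<lambda>_. 0) \<in> Jd d"
| JdS: "f \<in> Jd d \<Longrightarrow> r < 5 \<Longrightarrow> mdeg n + 2 = d \<Longrightarrow> (\<lambda>m. f m + c * gen n r m) \<in> Jd d"

lemma Jd_gen: "r < 5 \<Longrightarrow> mdeg n + 2 = d \<Longrightarrow> gen n r \<in> Jd d"
  using JdS[OF Jd0, of r n d 1] by simp

lemma Jd_add: "g \<in> Jd d \<Longrightarrow> f \<in> Jd d \<Longrightarrow> (\<lambda>m. f m + g m) \<in> Jd d"
proof (induction g rule: Jd.induct)
  case Jd0 then show ?case by simp
next
  case (JdS g r n c)
  have "(\<lambda>m. (f m + g m) + c * gen n r m) \<in> Jd d" using JdS by (intro Jd.JdS) auto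
  then show ?case by (simp add: add.assoc)
qed

lemma Jd_smult: "f \<in> Jd d \<Longrightarrow> (\<lambda>m. a * f m) \<in> Jd d"
proof (induction f rule: Jd.induct)
  case Jd0 then show ?case by simp (rule Jd.Jd0)
next
  case (JdS g r n c)
  have "(\<lambda>m. a * g m + (a * c) * gen n r m) \<in> Jd d" using JdS by (intro Jd.JdS) auto
  then show ?case by (simp add: algebra_simps)
qed

lemma Jd_sum: "finite K \<Longrightarrow> (\<And>k. k \<in> K \<Longrightarrow> f k \<in> Jd d) \<Longrightarrow> (\<lambda>m. \<Sum>k\<in>K. a k * f k m) \<in> Jd d"
proof (induction K rule: finite_induct)
  case empty then show ?case by (simp add: Jd.Jd0)
next
  case (insert x F)
  have "(\<lambda>m. (\<Sum>k\<in>F. a k * f k m) + a x * f x m) \<in> Jd d"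
    using insert by (intro Jd_add Jd_smult) auto
  then show ?case using insert by (simp add: add.commute)
qed

lemma Jd_diff: "f \<in> Jd d \<Longrightarrow> g \<in> Jd d \<Longrightarrow> (\<lambda>m. f m - g m) \<in> Jd d"
  using Jd_add[of "\<lambda>m. (-1) * g m" d f] Jd_smult[of g d "-1"] by simp

lemma gen_nz: "gen n r m \<noteq> 0 \<Longrightarrow> \<exists>k. m = sh r k n"
proof (rule ccontr)
  assume "gen n r m \<noteq> 0" "\<nexists>k. m = sh r k n"
  then have "\<forall>k. m \<noteq> sh r k n" by blast
  then have "gen n r m = 0" unfolding gen_def by simp
  with \<open>gen n r m \<noteq> 0\<close> show False by simp
qed

lemma Jd_supp: "f \<in> Jd d \<Longrightarrow> f m \<noteq> 0 \<Longrightarrow> mdeg m = d"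
proof (induction f rule: Jd.induct)
  case Jd0 then show ?case by simp
next
  case (JdS f r n c)
  show ?case
  proof (cases "f m = 0")
    case True
    then have "gen n r m \<noteq> 0" using JdS.prems by (cases "gen n r m = 0") simp_all
    then obtain k where "m = sh r k n" using gen_nz by blast
    then show ?thesis using JdS.hyps by simp
  next
    case False then show ?thesis using JdS.IH by blast
  qed
qed

lemma Jd_pair:
  fixes L :: "mono \<Rightarrow> 'a::comm_ring_1" and h :: "complex \<Rightarrow> 'a"
  assumes hadd: "\<And>x y. h (x + y) = h x + h y" and hmult: "\<And>x y. h (x * y) = h x * h y"
    and h0: "h 0 = 0" and h1: "h 1 = 1" and hm: "h (-1) = -1"
    and rel: "\<And>n r. r < 5 \<Longrightarrow> mdeg n + 2 = d \<Longrightarrow> (\<Sum>k<3. eps k * L (sh r k n)) = 0"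
    and f: "f \<in> Jd d"
  shows "(\<Sum>m\<in>Sd d. h (f m) * L m) = 0"
  using f
proof (induction f rule: Jd.induct)
  case Jd0 then show ?case by (simp add: h0)
next
  case (JdS f r n c)
  have heps: "h (eps k) = eps k" for k by (simp add: eps_def h1 hm)
  have hsum: "h (\<Sum>k\<in>K. g k) = (\<Sum>k\<in>K. h (g k))" if "finite K" for K and g :: "nat \<Rightarrow> complex"
    using that by (induction K rule: finite_induct) (auto simp: h0 hadd)
  have hif: "h (if b then 1 else 0) = (if b then 1 else 0)" for b by (simp add: h0 h1)
  have hg: "h (gen n r m) = (\<Sum>k<3. eps k * (if m = sh r k n then 1 else 0))" for m
    unfolding gen_def by (simp only: hsum[OF finite_lessThan] hmult heps hif)
  have "(\<Sum>m\<in>Sd d. h (gen n r m) * L m) = (\<Sum>m\<in>Sd d. \<Sum>k<3. eps k * (if m = sh r k n then L m else 0))"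
    unfolding hg sum_distrib_right by (intro sum.cong refl) simp
  also have "\<dots> = (\<Sum>k<3. \<Sum>m\<in>Sd d. eps k * (if m = sh r k n then L m else 0))"
    by (rule sum.swap)
  also have "\<dots> = (\<Sum>k<3. eps k * L (sh r k n))"
  proof (rule sum.cong)
    fix k assume "k \<in> {..<3::nat}"
    have "sh r k n \<in> Sd d" using JdS by (simp add: Sd_def)
    then show "(\<Sum>m\<in>Sd d. eps k * (if m = sh r k n then L m else 0)) = eps k * L (sh r k n)"
      by (simp add: finite_Sd sum.delta' flip: sum_distrib_left)
  qed simp
  also have "\<dots> = 0" using rel JdS by simp
  finally have g0: "(\<Sum>m\<in>Sd d. h (gen n r m) * L m) = 0" .
  have "(\<Sum>m\<in>Sd d. h (f m + c * gen n r m) * L m) =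
     (\<Sum>m\<in>Sd d. h (f m) * L m + h c * (h (gen n r m) * L m))"
    by (rule sum.cong) (simp_all only: hadd hmult distrib_right mult.assoc)
  also have "\<dots> = (\<Sum>m\<in>Sd d. h (f m) * L m) + h c * (\<Sum>m\<in>Sd d. h (gen n r m) * L m)"
    by (simp only: sum.distrib sum_distrib_left)
  also have "\<dots> = 0" using JdS.IH g0 by simp
  finally show ?case .
qed

definition fct :: "mono \<Rightarrow> complex" where
  "fct m = (\<Prod>v\<in>UNIV. of_nat (fact (m v)))"

lemma fct_upd1: "fct (upd1 v m) = fct m * of_nat (m v + 1)"
proof -
  have "fct (upd1 v m) = (\<Prod>w\<in>UNIV. of_nat (fact (m w)) * (if w = v then of_nat (m v + 1) else 1))"
    unfolding fct_def by (rule prod.cong) (auto simp: upd1_def algebra_simps)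
  also have "\<dots> = fct m * of_nat (m v + 1)"
    by (simp add: prod.distrib fct_def)
  finally show ?thesis .
qed

lemma fct_nz: "fct m \<noteq> 0"
  unfolding fct_def by (simp add: prod_zero_iff)

lemma pd2_eq: "a \<noteq> b \<Longrightarrow> pd2 a b p m = of_nat (m a + 1) * of_nat (m b + 1) * p (upd1 b (upd1 a m))"
  unfolding pd2_def pd_def upd1_def by simp

definition opR :: "nat \<Rightarrow> cpoly \<Rightarrow> cpoly" where
  "opR r p = (if r = 0 then opD p else if r = 1 then opD1 p else if r = 2 then opD2 p
     else if r = 3 then opD3 p else opD4 p)"

lemma sum3: "(\<Sum>k<(3::nat). f k) = f 0 + f 1 + (f 2 :: 'a::comm_monoid_add)"
  by (simp add: numeral_3_eq_3 numeral_2_eq_2 lessThan_Suc add_ac)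

lemma opR_eq: "r < 5 \<Longrightarrow> opR r p m = (\<Sum>k<3. eps k * pd2 (fa r k) (fb r k) p m)"
  unfolding sum3
  by (auto simp: opR_def opD_def opD1_def opD2_def opD3_def opD4_def padd_def psub_def
      fa_def fb_def eps_def less_Suc_eq numeral_eq_Suc)

lemma scaled_rel:
  assumes "r < 5"
  shows "(\<Sum>k<3. eps k * (p (sh r k n) * fct (sh r k n))) = fct n * opR r p n"
proof -
  have "eps k * (p (sh r k n) * fct (sh r k n)) = fct n * (eps k * pd2 (fa r k) (fb r k) p n)"
    if "k < 3" for k
  proof -
    have ne: "fa r k \<noteq> fb r k" using fa_fb_neq assms that by auto
    have "upd1 (fa r k) n (fb r k) = n (fb r k)" using ne by (simp add: upd1_def)
    then show ?thesis using ne
      by (simp add: sh_def fct_upd1 pd2_eq algebra_simps)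
  qed
  then have "(\<Sum>k<3. eps k * (p (sh r k n) * fct (sh r k n))) = (\<Sum>k<3. fct n * (eps k * pd2 (fa r k) (fb r k) p n))"
    by (intro sum.cong) auto
  then show ?thesis using assms by (simp add: opR_eq sum_distrib_left)
qed

definition ni :: "var \<Rightarrow> nat" where
  "ni v = (case v of X1 \<Rightarrow> 1 | X2 \<Rightarrow> 2 | X3 \<Rightarrow> 3 | X4 \<Rightarrow> 4 | X12 \<Rightarrow> 1 | X13 \<Rightarrow> 1 | X14 \<Rightarrow> 1
     | X23 \<Rightarrow> 2 | X24 \<Rightarrow> 2 | X34 \<Rightarrow> 3)"
definition nj :: "var \<Rightarrow> nat" where
  "nj v = (case v of X1 \<Rightarrow> 5 | X2 \<Rightarrow> 5 | X3 \<Rightarrow> 5 | X4 \<Rightarrow> 5 | X12 \<Rightarrow> 2 | X13 \<Rightarrow> 3 | X14 \<Rightarrow> 4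
     | X23 \<Rightarrow> 3 | X24 \<Rightarrow> 4 | X34 \<Rightarrow> 4)"

definition lo :: "(nat \<Rightarrow> nat) \<Rightarrow> var \<Rightarrow> nat" where
  "lo \<sigma> v = min (\<sigma> (ni v)) (\<sigma> (nj v))"
definition hi :: "(nat \<Rightarrow> nat) \<Rightarrow> var \<Rightarrow> nat" where
  "hi \<sigma> v = max (\<sigma> (ni v)) (\<sigma> (nj v))"

definition Std :: "(nat \<Rightarrow> nat) \<Rightarrow> mono \<Rightarrow> bool" where
  "Std \<sigma> m = (\<forall>v w. lo \<sigma> v < lo \<sigma> w \<and> hi \<sigma> w < hi \<sigma> v \<longrightarrow> m v = 0 \<or> m w = 0)"

definition pp :: "(nat \<Rightarrow> 'a::comm_ring_1) \<Rightarrow> (nat \<Rightarrow> 'a) \<Rightarrow> var \<Rightarrow> 'a" where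
  "pp u w v = u (ni v) * w (nj v) - u (nj v) * w (ni v)"

lemma plucker:
  assumes "r < 5"
  shows "(\<Sum>k<3. eps k * (pp u w (fa r k) * pp u w (fb r k))) = 0"
proof -
  have "r = 0 \<or> r = 1 \<or> r = 2 \<or> r = 3 \<or> r = 4" using assms by auto
  then show ?thesis unfolding sum3
    by (elim disjE) (simp_all add: fa_def fb_def eps_def pp_def ni_def nj_def algebra_simps)
qed

definition mon :: "(nat \<Rightarrow> 'a::comm_ring_1) \<Rightarrow> (nat \<Rightarrow> 'a) \<Rightarrow> mono \<Rightarrow> 'a" where
  "mon u w m = (\<Prod>v\<in>UNIV. pp u w v ^ m v)"

lemma mon_upd1: "mon u w (upd1 v m) = pp u w v * mon u w m"
proof -
  have "mon u w (upd1 v m) = (\<Prod>x\<in>UNIV. pp u w x ^ m x * (if x = v then pp u w v else 1))"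
    unfolding mon_def by (rule prod.cong) (auto simp: upd1_def)
  also have "\<dots> = pp u w v * mon u w m"
    by (simp add: prod.distrib mon_def)
  finally show ?thesis .
qed

lemma mon_rel:
  assumes "r < 5"
  shows "(\<Sum>k<3. eps k * mon u w (sh r k n)) = 0"
proof -
  have "(\<Sum>k<3. eps k * mon u w (sh r k n)) = mon u w n * (\<Sum>k<3. eps k * (pp u w (fa r k) * pp u w (fb r k)))"
    by (simp add: sh_def mon_upd1 sum_distrib_left algebra_simps)
  then show ?thesis using plucker[OF assms, of u w] by simp
qed

lemma E_vanish:
  fixes u w :: "nat \<Rightarrow> complex poly"
  assumes "g \<in> Jd d"
  shows "(\<Sum>m\<in>Sd d. [:g m:] * mon u w m) = 0"
proof -
  have m1: "[:-1::complex:] = -1" by (simp add: one_pCons)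
  show ?thesis by (rule Jd_pair[OF _ _ _ _ _ mon_rel assms]) (auto simp: m1)
qed

lemma monom_diff_deg:
  assumes "a \<noteq> b"
  shows "monom (1::complex) a - monom 1 b \<noteq> 0 \<and> degree (monom (1::complex) a - monom 1 b) = max a b"
proof -
  let ?p = "monom (1::complex) a - monom 1 b"
  have c: "coeff ?p (max a b) \<noteq> 0" using assms by (auto simp: max_def)
  have nz: "?p \<noteq> 0"
  proof
    assume "?p = 0"
    then have "coeff ?p (max a b) = 0" by (simp only: coeff_0)
    with c show False by blast
  qed
  have "degree ?p \<le> max (degree (monom (1::complex) a)) (degree (monom (1::complex) b))"
    by (rule degree_diff_le_max)
  then have "degree ?p \<le> max a b" by (simp add: degree_monom_eq)
  moreover have "max a b \<le> degree ?p" using c by (rule le_degree)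
  ultimately show ?thesis using nz by simp
qed

lemma pow_ineq:
  fixes M :: nat
  assumes "M \<ge> 2" "\<alpha> < \<beta>"
  shows "M ^ \<beta> + M ^ (5 + \<alpha>) < M ^ \<alpha> + M ^ (5 + \<beta>)"
proof -
  have xy: "M ^ \<alpha> < M ^ \<beta>" using assms by (intro power_strict_increasing) auto
  have K1: "1 \<le> M ^ 4" using assms by (intro one_le_power) simp
  have K2: "M ^ 5 = M * M ^ 4" by (subst power_Suc[symmetric]) simp
  have K: "2 \<le> M ^ 5" unfolding K2 using assms K1
    by (metis mult.right_neutral mult_le_mono order_trans)
  define t where "t = M ^ \<beta> - M ^ \<alpha>"
  have t: "M ^ \<beta> = M ^ \<alpha> + t" "t > 0" using xy unfolding t_def by simp_all
  have "M ^ (5 + \<beta>) = M ^ 5 * M ^ \<alpha> + M ^ 5 * t" by (simp add: power_add t algebra_simps)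
  moreover have "M ^ (5 + \<alpha>) = M ^ 5 * M ^ \<alpha>" by (simp add: power_add)
  moreover have "t < M ^ 5 * t" using K t(2) by simp
  ultimately show ?thesis using t by simp
qed

definition pu :: "(nat \<Rightarrow> nat) \<Rightarrow> nat \<Rightarrow> nat \<Rightarrow> complex poly" where
  "pu \<sigma> M i = monom 1 (M ^ \<sigma> i)"
definition pw :: "(nat \<Rightarrow> nat) \<Rightarrow> nat \<Rightarrow> nat \<Rightarrow> complex poly" where
  "pw \<sigma> M i = monom 1 (M ^ (5 + \<sigma> i))"

lemma pp_deg:
  assumes "M \<ge> 2" "lo \<sigma> v < hi \<sigma> v"
  shows "pp (pu \<sigma> M) (pw \<sigma> M) v \<noteq> 0 \<and>
         degree (pp (pu \<sigma> M) (pw \<sigma> M) v) = M ^ lo \<sigma> v + M ^ (5 + hi \<sigma> v)"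
proof -
  let ?a = "\<sigma> (ni v)" and ?b = "\<sigma> (nj v)"
  have eq: "pp (pu \<sigma> M) (pw \<sigma> M) v = monom 1 (M ^ ?a + M ^ (5 + ?b)) - monom 1 (M ^ ?b + M ^ (5 + ?a))"
    by (simp add: pp_def pu_def pw_def mult_monom)
  have ab: "?a \<noteq> ?b" using assms(2) by (auto simp: lo_def hi_def)
  show ?thesis
  proof (cases "?a < ?b")
    case True
    have "M ^ ?b + M ^ (5 + ?a) < M ^ ?a + M ^ (5 + ?b)" using pow_ineq[OF assms(1) True] .
    then show ?thesis using monom_diff_deg[of "M ^ ?a + M ^ (5 + ?b)" "M ^ ?b + M ^ (5 + ?a)"] True
      unfolding eq by (simp add: lo_def hi_def max_def)
  next
    case False
    then have F: "?b < ?a" using ab by simp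
    have "M ^ ?a + M ^ (5 + ?b) < M ^ ?b + M ^ (5 + ?a)" using pow_ineq[OF assms(1) F] .
    then show ?thesis using monom_diff_deg[of "M ^ ?a + M ^ (5 + ?b)" "M ^ ?b + M ^ (5 + ?a)"] F
      unfolding eq by (simp add: lo_def hi_def max_def)
  qed
qed

definition Wt :: "(nat \<Rightarrow> nat) \<Rightarrow> nat \<Rightarrow> mono \<Rightarrow> nat" where
  "Wt \<sigma> M m = (\<Sum>v\<in>UNIV. m v * (M ^ lo \<sigma> v + M ^ (5 + hi \<sigma> v)))"

lemma mon_deg:
  assumes "M \<ge> 2" "\<And>v. lo \<sigma> v < hi \<sigma> v"
  shows "mon (pu \<sigma> M) (pw \<sigma> M) m \<noteq> 0 \<and> degree (mon (pu \<sigma> M) (pw \<sigma> M) m) = Wt \<sigma> M m"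
proof -
  have nz: "\<forall>v\<in>UNIV. pp (pu \<sigma> M) (pw \<sigma> M) v ^ m v \<noteq> 0" using pp_deg[OF assms(1) assms(2)] by simp
  then have "mon (pu \<sigma> M) (pw \<sigma> M) m \<noteq> 0" unfolding mon_def by (simp add: prod_zero_iff)
  moreover have "degree (mon (pu \<sigma> M) (pw \<sigma> M) m) = Wt \<sigma> M m"
    unfolding mon_def Wt_def
    using pp_deg[OF assms(1) assms(2)]
    by (simp add: degree_prod_eq_sum_degree nz degree_power_eq)
  ultimately show ?thesis by simp
qed

lemma digits_unique:
  fixes c c' :: "nat \<Rightarrow> nat"
  shows "(\<forall>i<n. c i < M) \<Longrightarrow> (\<forall>i<n. c' i < M) \<Longrightarrow>
    (\<Sum>i<n. c i * M ^ i) = (\<Sum>i<n. c' i * M ^ i) \<Longrightarrow> \<forall>i<n. c i = c' i"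
proof (induction n arbitrary: c c')
  case 0 then show ?case by simp
next
  case (Suc n)
  have split: "(\<Sum>i<Suc n. f i * M ^ i) = f 0 + M * (\<Sum>i<n. f (Suc i) * M ^ i)" for f :: "nat \<Rightarrow> nat"
    by (subst sum.lessThan_Suc_shift) (simp add: sum_distrib_left mult_ac)
  have e: "c 0 + M * (\<Sum>i<n. c (Suc i) * M ^ i) = c' 0 + M * (\<Sum>i<n. c' (Suc i) * M ^ i)"
    using Suc.prems(3) unfolding split .
  have c0: "c 0 < M" "c' 0 < M" using Suc.prems by auto
  have "(c 0 + M * (\<Sum>i<n. c (Suc i) * M ^ i)) mod M = c 0" using c0 by simp
  moreover have "(c' 0 + M * (\<Sum>i<n. c' (Suc i) * M ^ i)) mod M = c' 0" using c0 by simp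
  ultimately have h0: "c 0 = c' 0" using e by simp
  have "M > 0" using c0 by simp
  then have hr: "(\<Sum>i<n. c (Suc i) * M ^ i) = (\<Sum>i<n. c' (Suc i) * M ^ i)"
    using e h0 by simp
  have "\<forall>i<n. c (Suc i) = c' (Suc i)"
    by (rule Suc.IH) (use Suc.prems hr in auto)
  then show ?case using h0 by (auto simp: less_Suc_eq_0_disj)
qed

definition dig :: "(nat \<Rightarrow> nat) \<Rightarrow> mono \<Rightarrow> nat \<Rightarrow> nat" where
  "dig \<sigma> m i = (\<Sum>v\<in>UNIV. m v * ((if lo \<sigma> v = i then 1 else 0) + (if 5 + hi \<sigma> v = i then 1 else 0)))"

definition Am :: "(nat \<Rightarrow> nat) \<Rightarrow> mono \<Rightarrow> nat \<Rightarrow> nat" where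
  "Am \<sigma> m j = (\<Sum>v\<in>UNIV. m v * (if lo \<sigma> v = j then 1 else 0))"
definition Bm :: "(nat \<Rightarrow> nat) \<Rightarrow> mono \<Rightarrow> nat \<Rightarrow> nat" where
  "Bm \<sigma> m j = (\<Sum>v\<in>UNIV. m v * (if hi \<sigma> v = j then 1 else 0))"
definition Alt :: "(nat \<Rightarrow> nat) \<Rightarrow> mono \<Rightarrow> nat \<Rightarrow> nat" where
  "Alt \<sigma> m j = (\<Sum>v\<in>UNIV. m v * (if lo \<sigma> v < j then 1 else 0))"
definition Blt :: "(nat \<Rightarrow> nat) \<Rightarrow> mono \<Rightarrow> nat \<Rightarrow> nat" where
  "Blt \<sigma> m j = (\<Sum>v\<in>UNIV. m v * (if hi \<sigma> v < j then 1 else 0))"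
definition Tm :: "(nat \<Rightarrow> nat) \<Rightarrow> mono \<Rightarrow> nat \<Rightarrow> nat \<Rightarrow> nat" where
  "Tm \<sigma> m a b = (\<Sum>v\<in>UNIV. m v * (if lo \<sigma> v < a \<and> hi \<sigma> v < b then 1 else 0))"

lemma Alt_Suc: "Alt \<sigma> m (Suc j) = Alt \<sigma> m j + Am \<sigma> m j"
  unfolding Alt_def Am_def sum.distrib[symmetric] by (rule sum.cong) (auto simp: less_Suc_eq)

lemma Blt_Suc: "Blt \<sigma> m (Suc j) = Blt \<sigma> m j + Bm \<sigma> m j"
  unfolding Blt_def Bm_def sum.distrib[symmetric] by (rule sum.cong) (auto simp: less_Suc_eq)

lemma Alt_eq: "(\<And>j. Am \<sigma> m j = Am \<sigma> m' j) \<Longrightarrow> Alt \<sigma> m a = Alt \<sigma> m' a"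
  by (induction a) (simp_all add: Alt_Suc, simp add: Alt_def)

lemma Blt_eq: "(\<And>j. Bm \<sigma> m j = Bm \<sigma> m' j) \<Longrightarrow> Blt \<sigma> m a = Blt \<sigma> m' a"
  by (induction a) (simp_all add: Blt_Suc, simp add: Blt_def)

lemma StdD: "Std \<sigma> m \<Longrightarrow> lo \<sigma> v < lo \<sigma> w \<Longrightarrow> hi \<sigma> w < hi \<sigma> v \<Longrightarrow> m v = 0 \<or> m w = 0"
  unfolding Std_def by (drule spec[of _ v], drule spec[of _ w]) simp

lemma T_min:
  assumes "Std \<sigma> m"
  shows "Tm \<sigma> m a b = min (Alt \<sigma> m a) (Blt \<sigma> m b)"
proof -
  define X where "X = (\<Sum>v\<in>UNIV. m v * (if lo \<sigma> v < a \<and> \<not> hi \<sigma> v < b then 1 else 0))"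
  define Y where "Y = (\<Sum>v\<in>UNIV. m v * (if \<not> lo \<sigma> v < a \<and> hi \<sigma> v < b then 1 else 0))"
  have A: "Alt \<sigma> m a = Tm \<sigma> m a b + X"
    unfolding Alt_def Tm_def X_def by (simp add: sum.distrib[symmetric]) (rule sum.cong, auto)
  have B: "Blt \<sigma> m b = Tm \<sigma> m a b + Y"
    unfolding Blt_def Tm_def Y_def by (simp add: sum.distrib[symmetric]) (rule sum.cong, auto)
  have "X = 0 \<or> Y = 0"
  proof (rule ccontr)
    assume "\<not> (X = 0 \<or> Y = 0)"
    then have "X \<noteq> 0" "Y \<noteq> 0" by auto
    from \<open>X \<noteq> 0\<close> obtain v where v: "m v * (if lo \<sigma> v < a \<and> \<not> hi \<sigma> v < b then 1 else 0) \<noteq> 0"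
      unfolding X_def using sum.not_neutral_contains_not_neutral by blast
    from \<open>Y \<noteq> 0\<close> obtain w where w: "m w * (if \<not> lo \<sigma> w < a \<and> hi \<sigma> w < b then 1 else 0) \<noteq> 0"
      unfolding Y_def using sum.not_neutral_contains_not_neutral by blast
    have "m v \<noteq> 0" "lo \<sigma> v < a" "\<not> hi \<sigma> v < b" using v by (auto split: if_splits)
    moreover have "m w \<noteq> 0" "\<not> lo \<sigma> w < a" "hi \<sigma> w < b" using w by (auto split: if_splits)
    ultimately have h: "lo \<sigma> v < lo \<sigma> w" "hi \<sigma> w < hi \<sigma> v" "m v \<noteq> 0" "m w \<noteq> 0" by linarith+
    have "m v = 0 \<or> m w = 0" by (rule StdD[OF assms h(1,2)])
    then show False using h(3,4) by blast
  qed
  then show ?thesis using A B by auto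
qed

lemma T_recover:
  assumes inj: "\<And>x. lo \<sigma> x = lo \<sigma> v \<Longrightarrow> hi \<sigma> x = hi \<sigma> v \<Longrightarrow> x = v"
  shows "Tm \<sigma> m (lo \<sigma> v + 1) (hi \<sigma> v + 1) + Tm \<sigma> m (lo \<sigma> v) (hi \<sigma> v)
       = Tm \<sigma> m (lo \<sigma> v) (hi \<sigma> v + 1) + Tm \<sigma> m (lo \<sigma> v + 1) (hi \<sigma> v) + m v"
proof -
  have pt: "m x * (if lo \<sigma> x < lo \<sigma> v + 1 \<and> hi \<sigma> x < hi \<sigma> v + 1 then 1 else 0)
     + m x * (if lo \<sigma> x < lo \<sigma> v \<and> hi \<sigma> x < hi \<sigma> v then 1 else 0)
     = m x * (if lo \<sigma> x < lo \<sigma> v \<and> hi \<sigma> x < hi \<sigma> v + 1 then 1 else 0)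
     + m x * (if lo \<sigma> x < lo \<sigma> v + 1 \<and> hi \<sigma> x < hi \<sigma> v then 1 else 0)
     + (if x = v then m v else 0)" for x
  proof (cases "x = v")
    case True then show ?thesis by simp
  next
    case False
    then have "\<not> (lo \<sigma> x = lo \<sigma> v \<and> hi \<sigma> x = hi \<sigma> v)" using inj by blast
    then show ?thesis using False by (auto split: if_splits)
  qed
  have "(\<Sum>x\<in>UNIV. m x * (if lo \<sigma> x < lo \<sigma> v + 1 \<and> hi \<sigma> x < hi \<sigma> v + 1 then 1 else 0)
     + m x * (if lo \<sigma> x < lo \<sigma> v \<and> hi \<sigma> x < hi \<sigma> v then 1 else 0))
     = (\<Sum>x\<in>UNIV. m x * (if lo \<sigma> x < lo \<sigma> v \<and> hi \<sigma> x < hi \<sigma> v + 1 then 1 else 0)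
     + m x * (if lo \<sigma> x < lo \<sigma> v + 1 \<and> hi \<sigma> x < hi \<sigma> v then 1 else 0)
     + (if x = v then m v else 0))"
    by (rule sum.cong[OF refl], rule pt)
  then show ?thesis unfolding Tm_def by (simp only: sum.distrib sum.delta finite UNIV_I if_True)
qed

locale sig =
  fixes \<sigma> :: "nat \<Rightarrow> nat"
  assumes lohi: "\<And>v. lo \<sigma> v < hi \<sigma> v"
    and hi5: "\<And>v. hi \<sigma> v < 5"
    and lohi_inj: "\<And>v w. lo \<sigma> v = lo \<sigma> w \<Longrightarrow> hi \<sigma> v = hi \<sigma> w \<Longrightarrow> v = w"
begin

lemma std_unique:
  assumes "Std \<sigma> m" "Std \<sigma> m'" "\<And>j. Am \<sigma> m j = Am \<sigma> m' j" "\<And>j. Bm \<sigma> m j = Bm \<sigma> m' j"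
  shows "m = m'"
proof
  fix v
  have T: "Tm \<sigma> m a b = Tm \<sigma> m' a b" for a b
    using T_min[OF assms(1)] T_min[OF assms(2)] Alt_eq[of \<sigma> m m', OF assms(3)] Blt_eq[of \<sigma> m m', OF assms(4)]
    by simp
  have i: "\<And>x. lo \<sigma> x = lo \<sigma> v \<Longrightarrow> hi \<sigma> x = hi \<sigma> v \<Longrightarrow> x = v" using lohi_inj by blast
  show "m v = m' v" using T_recover[of \<sigma> v m, OF i] T_recover[of \<sigma> v m', OF i] T by simp
qed

lemma Wt_digits: "Wt \<sigma> M m = (\<Sum>i<10. dig \<sigma> m i * M ^ i)"
proof -
  have pv: "M ^ lo \<sigma> v + M ^ (5 + hi \<sigma> v)
     = (\<Sum>i<10. ((if lo \<sigma> v = i then 1 else 0) + (if 5 + hi \<sigma> v = i then 1 else 0)) * M ^ i)" for v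
  proof -
    have "lo \<sigma> v < 10" "5 + hi \<sigma> v < 10" using lohi[of v] hi5[of v] by auto
    have "(\<Sum>i<10. ((if lo \<sigma> v = i then 1 else 0) + (if 5 + hi \<sigma> v = i then 1 else 0)) * M ^ i)
      = (\<Sum>i<10. (if lo \<sigma> v = i then M ^ i else 0)) + (\<Sum>i<10. (if 5 + hi \<sigma> v = i then M ^ i else 0))"
      unfolding sum.distrib[symmetric] by (rule sum.cong) auto
    then show ?thesis using \<open>lo \<sigma> v < 10\<close> \<open>5 + hi \<sigma> v < 10\<close> by (simp add: sum.delta')
  qed
  have "Wt \<sigma> M m = (\<Sum>v\<in>UNIV. \<Sum>i<10. m v * (((if lo \<sigma> v = i then 1 else 0) + (if 5 + hi \<sigma> v = i then 1 else 0)) * M ^ i))"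
    unfolding Wt_def pv by (simp add: sum_distrib_left)
  also have "\<dots> = (\<Sum>i<10. \<Sum>v\<in>UNIV. m v * (((if lo \<sigma> v = i then 1 else 0) + (if 5 + hi \<sigma> v = i then 1 else 0)) * M ^ i))"
    by (rule sum.swap)
  also have "\<dots> = (\<Sum>i<10. dig \<sigma> m i * M ^ i)"
    unfolding dig_def by (simp add: sum_distrib_right mult.assoc)
  finally show ?thesis .
qed

lemma dig_le: "dig \<sigma> m i \<le> mdeg m"
  unfolding dig_def mdeg_def
proof (rule sum_mono)
  fix v :: var
  have "\<not> (lo \<sigma> v = i \<and> 5 + hi \<sigma> v = i)" using lohi[of v] by auto
  then show "m v * ((if lo \<sigma> v = i then 1 else 0) + (if 5 + hi \<sigma> v = i then 1 else 0)) \<le> m v"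
    by auto
qed

lemma dig_A: "j < 5 \<Longrightarrow> dig \<sigma> m j = Am \<sigma> m j"
  unfolding dig_def Am_def by (intro sum.cong) auto

lemma dig_B: "j < 5 \<Longrightarrow> dig \<sigma> m (5 + j) = Bm \<sigma> m j"
  unfolding dig_def Bm_def
proof (intro sum.cong refl)
  fix x
  have "lo \<sigma> x < 5" using lohi[of x] hi5[of x] by linarith
  then show "m x * ((if lo \<sigma> x = 5 + j then 1 else 0) + (if 5 + hi \<sigma> x = 5 + j then 1 else 0)) =
    m x * (if hi \<sigma> x = j then 1 else 0)" by simp
qed

lemma A_big: "j \<ge> 5 \<Longrightarrow> Am \<sigma> m j = 0"
  unfolding Am_def
proof (intro sum.neutral ballI)
  fix x assume "j \<ge> 5"
  have "lo \<sigma> x < 5" using lohi[of x] hi5[of x] by linarith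
  then show "m x * (if lo \<sigma> x = j then 1 else 0) = 0" using \<open>j \<ge> 5\<close> by simp
qed

lemma B_big: "j \<ge> 5 \<Longrightarrow> Bm \<sigma> m j = 0"
  unfolding Bm_def
proof (intro sum.neutral ballI)
  fix x assume "j \<ge> 5"
  have "hi \<sigma> x < 5" using hi5[of x] by linarith
  then show "m x * (if hi \<sigma> x = j then 1 else 0) = 0" using \<open>j \<ge> 5\<close> by simp
qed

lemma Wt_inj:
  assumes "Std \<sigma> m" "Std \<sigma> m'" "mdeg m < M" "mdeg m' < M" "Wt \<sigma> M m = Wt \<sigma> M m'"
  shows "m = m'"
proof -
  have "\<forall>i<10. dig \<sigma> m i = dig \<sigma> m' i"
    by (rule digits_unique[of 10 "dig \<sigma> m" M "dig \<sigma> m'"])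
       (use dig_le[of m] dig_le[of m'] assms Wt_digits in \<open>auto intro: le_less_trans\<close>)
  then have dd: "\<And>i. i < 10 \<Longrightarrow> dig \<sigma> m i = dig \<sigma> m' i" by blast
  have dA: "Am \<sigma> m j = Am \<sigma> m' j" if "j < 5" for j
    using dig_A[OF that, of m] dig_A[OF that, of m'] dd[of j] that by simp
  have dB: "Bm \<sigma> m j = Bm \<sigma> m' j" if "j < 5" for j
    using dig_B[OF that, of m] dig_B[OF that, of m'] dd[of "5 + j"] that by simp
  have "Am \<sigma> m j = Am \<sigma> m' j" for j
    by (cases "j < 5") (auto simp: dA A_big)
  moreover have "Bm \<sigma> m j = Bm \<sigma> m' j" for j
    by (cases "j < 5") (auto simp: dB B_big)
  ultimately show ?thesis using std_unique assms by blast
qed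

end

lemma indep:
  fixes f :: "'b \<Rightarrow> complex poly"
  assumes fin: "finite A" and nz: "\<forall>s\<in>A. f s \<noteq> 0" and inj: "inj_on (\<lambda>s. degree (f s)) A"
    and sum0: "(\<Sum>s\<in>A. smult (c s) (f s)) = 0"
  shows "\<forall>s\<in>A. c s = 0"
proof (rule ccontr)
  assume "\<not> (\<forall>s\<in>A. c s = 0)"
  define B where "B = {s\<in>A. c s \<noteq> 0}"
  have Bne: "B \<noteq> {}" and Bfin: "finite B" using \<open>\<not> (\<forall>s\<in>A. c s = 0)\<close> fin by (auto simp: B_def)
  define D where "D = Max ((\<lambda>s. degree (f s)) ` B)"
  have "D \<in> (\<lambda>s. degree (f s)) ` B" unfolding D_def using Bne Bfin by (intro Max_in) auto
  then obtain s0 where s0: "s0 \<in> B" "degree (f s0) = D" by auto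
  have le: "degree (f s) \<le> D" if "s \<in> B" for s unfolding D_def using Bfin that by (intro Max_ge) auto
  have s0A: "s0 \<in> A" using s0 by (simp add: B_def)
  have "coeff (\<Sum>s\<in>A. smult (c s) (f s)) D = (\<Sum>s\<in>A. c s * coeff (f s) D)" by (simp add: coeff_sum)
  also have "\<dots> = (\<Sum>s\<in>A. if s = s0 then c s0 * coeff (f s0) D else 0)"
  proof (rule sum.cong[OF refl])
    fix s assume sA: "s \<in> A"
    show "c s * coeff (f s) D = (if s = s0 then c s0 * coeff (f s0) D else 0)"
    proof (cases "s = s0")
      case False
      show ?thesis
      proof (cases "c s = 0")
        case False
        then have "s \<in> B" using sA by (simp add: B_def)
        then have "degree (f s) \<le> D" by (rule le)
        moreover have "degree (f s) \<noteq> D" using inj sA s0A \<open>s \<noteq> s0\<close> s0(2) unfolding inj_on_def by metis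
        ultimately have "degree (f s) < D" by simp
        then show ?thesis using \<open>s \<noteq> s0\<close> by (simp add: coeff_eq_0)
      qed (use \<open>s \<noteq> s0\<close> in simp)
    qed simp
  qed
  also have "\<dots> = c s0 * coeff (f s0) D" using fin s0A by (simp add: sum.delta)
  finally have "c s0 * coeff (f s0) D = 0" using sum0 by simp
  moreover have "c s0 \<noteq> 0" using s0 by (simp add: B_def)
  moreover have "coeff (f s0) D \<noteq> 0" using s0(2) nz s0A by auto
  ultimately show False by simp
qed

context sig
begin

lemma claimB:
  assumes g: "g \<in> Jd d" and st: "\<And>s. g s \<noteq> 0 \<Longrightarrow> Std \<sigma> s"
  shows "g = (\<lambda>_. 0)"
proof -
  define M where "M = d + 2"
  have M2: "M \<ge> 2" by (simp add: M_def)
  let ?u = "pu \<sigma> M" and ?w = "pw \<sigma> M"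
  define A where "A = {s\<in>Sd d. Std \<sigma> s}"
  have finA: "finite A" unfolding A_def using finite_Sd by simp
  have E: "(\<Sum>m\<in>Sd d. [:g m:] * mon ?u ?w m) = 0" by (rule E_vanish[OF g])
  have "(\<Sum>m\<in>Sd d. [:g m:] * mon ?u ?w m) = (\<Sum>m\<in>A. smult (g m) (mon ?u ?w m))"
  proof (rule sum.mono_neutral_cong_right)
    show "finite (Sd d)" by (rule finite_Sd)
    show "A \<subseteq> Sd d" by (auto simp: A_def)
    show "\<forall>i\<in>Sd d - A. [:g i:] * mon ?u ?w i = 0"
    proof
      fix i assume "i \<in> Sd d - A"
      then have "g i = 0" using st by (auto simp: A_def)
      then show "[:g i:] * mon ?u ?w i = 0" by simp
    qed
    show "\<And>x. x \<in> A \<Longrightarrow> [:g x:] * mon ?u ?w x = smult (g x) (mon ?u ?w x)" by simp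
  qed
  with E have S0: "(\<Sum>m\<in>A. smult (g m) (mon ?u ?w m)) = 0" by simp
  have nz: "\<forall>s\<in>A. mon ?u ?w s \<noteq> 0" using mon_deg[OF M2 lohi] by simp
  have inj: "inj_on (\<lambda>s. degree (mon ?u ?w s)) A"
  proof (rule inj_onI)
    fix x y assume xy: "x \<in> A" "y \<in> A" "degree (mon ?u ?w x) = degree (mon ?u ?w y)"
    then have "Wt \<sigma> M x = Wt \<sigma> M y" using mon_deg[OF M2 lohi] by simp
    moreover have "mdeg x < M" "mdeg y < M" using xy by (auto simp: A_def Sd_def M_def)
    moreover have "Std \<sigma> x" "Std \<sigma> y" using xy by (auto simp: A_def)
    ultimately show "x = y" using Wt_inj by blast
  qed
  have zA: "\<forall>s\<in>A. g s = 0" by (rule indep[OF finA nz inj S0])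
  show ?thesis
  proof
    fix s show "g s = 0"
    proof (rule ccontr)
      assume "g s \<noteq> 0"
      then have "s \<in> A" using st Jd_supp[OF g] by (auto simp: A_def Sd_def)
      with zA \<open>g s \<noteq> 0\<close> show False by blast
    qed
  qed
qed

end

definition cc :: "(nat \<Rightarrow> nat) \<Rightarrow> var \<Rightarrow> nat" where
  "cc \<sigma> v = (hi \<sigma> v - lo \<sigma> v)^2"

definition mu :: "(nat \<Rightarrow> nat) \<Rightarrow> mono \<Rightarrow> nat" where
  "mu \<sigma> m = (\<Sum>v\<in>UNIV. m v * cc \<sigma> v)"

lemma mu_upd1: "mu \<sigma> (upd1 v m) = mu \<sigma> m + cc \<sigma> v"
  using sum_upd1[of v m "cc \<sigma>"] by (simp add: mu_def)

definition good :: "(nat \<Rightarrow> nat) \<Rightarrow> nat \<Rightarrow> mono \<Rightarrow> cpoly \<Rightarrow> bool" where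
  "good \<sigma> d m g = ((\<forall>s. g s \<noteq> 0 \<longrightarrow> Std \<sigma> s \<and> mdeg s = d) \<and> (\<lambda>s. (if s = m then 1 else 0) - g s) \<in> Jd d)"

lemma dn_up: "(0 < s v \<and> s(v := s v - 1) = x) \<longleftrightarrow> s = upd1 v x"
proof
  assume h: "0 < s v \<and> s(v := s v - 1) = x"
  then have hx: "x = s(v := s v - 1)" by simp
  show "s = upd1 v x"
  proof
    fix w show "s w = upd1 v x w" using h unfolding hx by (cases "w = v") (auto simp: upd1_def)
  qed
next
  assume "s = upd1 v x"
  then show "0 < s v \<and> s(v := s v - 1) = x" by (auto simp: upd1_def fun_eq_iff)
qed

locale full = sig +
  fixes \<kappa> :: "nat \<Rightarrow> nat" and v0 :: var
  assumes cov: "\<And>v w. lo \<sigma> v < lo \<sigma> w \<Longrightarrow> hi \<sigma> w < hi \<sigma> v \<Longrightarrow>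
       \<exists>r<5. (fa r (\<kappa> r) = v \<and> fb r (\<kappa> r) = w) \<or> (fa r (\<kappa> r) = w \<and> fb r (\<kappa> r) = v)"
    and dec: "\<And>r j. r < 5 \<Longrightarrow> j < 3 \<Longrightarrow> j \<noteq> \<kappa> r \<Longrightarrow>
       cc \<sigma> (fa r j) + cc \<sigma> (fb r j) < cc \<sigma> (fa r (\<kappa> r)) + cc \<sigma> (fb r (\<kappa> r))"
    and kap: "\<And>r. r < 5 \<Longrightarrow> \<kappa> r < 3"
    and v0lo: "lo \<sigma> v0 = 0" and v0hi: "hi \<sigma> v0 = 1"
begin

lemma claimA: "\<exists>g. good \<sigma> (mdeg m) m g"
proof (induction m rule: measure_induct_rule[where f = "mu \<sigma>"])
  case (less m)
  show ?case
  proof (cases "Std \<sigma> m")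
    case True
    have "good \<sigma> (mdeg m) m (\<lambda>s. if s = m then 1 else 0)"
      unfolding good_def using True by (auto simp: Jd.Jd0)
    then show ?thesis by blast
  next
    case False
    then obtain v w where vw: "lo \<sigma> v < lo \<sigma> w" "hi \<sigma> w < hi \<sigma> v" "m v \<noteq> 0" "m w \<noteq> 0"
      unfolding Std_def by blast
    obtain r where r: "r < 5" "(fa r (\<kappa> r) = v \<and> fb r (\<kappa> r) = w) \<or> (fa r (\<kappa> r) = w \<and> fb r (\<kappa> r) = v)"
      using cov[OF vw(1,2)] by blast
    define k where "k = \<kappa> r"
    define a where "a = fa r k"
    define b where "b = fb r k"
    have k3: "k < 3" using kap r(1) by (simp add: k_def)
    have ab: "a \<noteq> b" using fa_fb_neq[OF r(1) k3] by (simp add: a_def b_def)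
    have ma: "m a > 0" "m b > 0" using r(2) vw(3,4) by (auto simp: a_def b_def k_def)
    define n where "n = m(a := m a - 1, b := m b - 1)"
    have mn: "sh r k n = m"
      unfolding sh_def upd1_def n_def a_def[symmetric] b_def[symmetric] using ab ma
      by (auto simp: fun_eq_iff)
    have dn: "mdeg (sh r j n) = mdeg m" for j using mdeg_sh[of r j n] mdeg_sh[of r k n] mn by simp
    have mush: "mu \<sigma> (sh r j n) = mu \<sigma> n + cc \<sigma> (fa r j) + cc \<sigma> (fb r j)" for j
      by (simp add: sh_def mu_upd1)
    define K where "K = {..<3::nat} - {k}"
    have lt: "mu \<sigma> (sh r j n) < mu \<sigma> m" if "j \<in> K" for j
    proof -
      have "cc \<sigma> (fa r j) + cc \<sigma> (fb r j) < cc \<sigma> a + cc \<sigma> b"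
        using dec[OF r(1), of j] that by (simp add: K_def a_def b_def k_def)
      then show ?thesis using mush[of j] mush[of k] mn by (simp add: a_def b_def)
    qed
    define G where "G j = (SOME g. good \<sigma> (mdeg m) (sh r j n) g)" for j
    have G: "good \<sigma> (mdeg m) (sh r j n) (G j)" if "j \<in> K" for j
    proof -
      have "\<exists>g. good \<sigma> (mdeg (sh r j n)) (sh r j n) g" using less lt[OF that] by blast
      then show ?thesis unfolding G_def dn by (rule someI_ex)
    qed
    define g where "g s = - eps k * (\<Sum>j\<in>K. eps j * G j s)" for s
    have supp: "Std \<sigma> s \<and> mdeg s = mdeg m" if "g s \<noteq> 0" for s
    proof -
      have "(\<Sum>j\<in>K. eps j * G j s) \<noteq> 0" using that by (auto simp: g_def)
      then obtain j where "j \<in> K" "eps j * G j s \<noteq> 0" using sum.not_neutral_contains_not_neutral by blast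
      then show ?thesis using G[of j] by (auto simp: good_def)
    qed
    have finK: "finite K" by (simp add: K_def)
    have kin: "k \<in> {..<3}" using k3 by simp
    have genr: "gen n r s = eps k * (if s = m then 1 else 0) + (\<Sum>j\<in>K. eps j * (if s = sh r j n then 1 else 0))" for s
      unfolding gen_def K_def using sum.remove[OF finite_lessThan kin, of "\<lambda>j. eps j * (if s = sh r j n then 1 else 0)"] mn
      by simp
    have eq: "(\<lambda>s. (if s = m then 1 else 0) - g s) =
       (\<lambda>s. eps k * gen n r s - (\<Sum>j\<in>K. (eps k * eps j) * ((if s = sh r j n then 1 else 0) - G j s)))"
    proof
      fix s
      have "eps k * gen n r s = (if s = m then 1 else 0) + (\<Sum>j\<in>K. (eps k * eps j) * (if s = sh r j n then 1 else 0))"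
        unfolding genr by (simp add: algebra_simps sum_distrib_left)
      moreover have "(\<Sum>j\<in>K. (eps k * eps j) * ((if s = sh r j n then 1 else 0) - G j s)) =
          (\<Sum>j\<in>K. (eps k * eps j) * (if s = sh r j n then 1 else 0)) - (\<Sum>j\<in>K. (eps k * eps j) * G j s)"
        by (simp add: algebra_simps sum_subtractf)
      moreover have "g s = - (\<Sum>j\<in>K. (eps k * eps j) * G j s)"
        unfolding g_def mult_minus_left sum_distrib_left by (simp add: mult_ac sum_negf)
      ultimately show "(if s = m then 1 else 0) - g s =
        eps k * gen n r s - (\<Sum>j\<in>K. (eps k * eps j) * ((if s = sh r j n then 1 else 0) - G j s))"
        by simp
    qed
    have "(\<lambda>s. eps k * gen n r s - (\<Sum>j\<in>K. (eps k * eps j) * ((if s = sh r j n then 1 else 0) - G j s))) \<in> Jd (mdeg m)"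
    proof (rule Jd_diff)
      show "(\<lambda>s. eps k * gen n r s) \<in> Jd (mdeg m)"
        using Jd_gen[OF r(1), of n "mdeg m"] dn[of k] by (intro Jd_smult) simp
      show "(\<lambda>s. \<Sum>j\<in>K. (eps k * eps j) * ((if s = sh r j n then 1 else 0) - G j s)) \<in> Jd (mdeg m)"
        using G finK by (intro Jd_sum) (auto simp: good_def)
    qed
    then have "good \<sigma> (mdeg m) m g" unfolding good_def eq using supp by blast
    then show ?thesis by blast
  qed
qed

definition N :: "mono \<Rightarrow> cpoly" where
  "N m = (SOME g. good \<sigma> (mdeg m) m g)"

lemma goodN: "good \<sigma> (mdeg m) m (N m)"
  unfolding N_def using claimA by (rule someI_ex)

lemma good_unique:
  assumes "good \<sigma> d m g1" "good \<sigma> d m g2"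
  shows "g1 = g2"
proof -
  have J1: "(\<lambda>s. (if s = m then 1 else 0) - g1 s) \<in> Jd d" and J2: "(\<lambda>s. (if s = m then 1 else 0) - g2 s) \<in> Jd d"
    using assms unfolding good_def by auto
  have "(\<lambda>s. ((if s = m then 1 else 0) - g2 s) - ((if s = m then 1 else 0) - g1 s)) \<in> Jd d"
    using Jd_diff[OF J2 J1] by simp
  moreover have "(\<lambda>s. ((if s = m then 1 else 0) - g2 s) - ((if s = m then 1 else 0) - g1 s)) = (\<lambda>s. g1 s - g2 s)"
    by auto
  ultimately have J: "(\<lambda>s. g1 s - g2 s) \<in> Jd d" by simp
  have "(\<lambda>s. g1 s - g2 s) = (\<lambda>_. 0)"
  proof (rule claimB[OF J])
    fix s assume "g1 s - g2 s \<noteq> 0"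
    then have "g1 s \<noteq> 0 \<or> g2 s \<noteq> 0" by auto
    then show "Std \<sigma> s" using assms unfolding good_def by auto
  qed
  then show ?thesis by (auto simp: fun_eq_iff dest: fun_cong)
qed

lemma Std_up: "Std \<sigma> m \<Longrightarrow> Std \<sigma> (upd1 v0 m)"
  unfolding Std_def
proof (intro allI impI)
  fix v w assume S: "\<forall>v w. lo \<sigma> v < lo \<sigma> w \<and> hi \<sigma> w < hi \<sigma> v \<longrightarrow> m v = 0 \<or> m w = 0"
    and n: "lo \<sigma> v < lo \<sigma> w \<and> hi \<sigma> w < hi \<sigma> v"
  have "w \<noteq> v0" using n v0lo by auto
  moreover have "v \<noteq> v0" using n v0lo v0hi lohi[of w] by auto
  ultimately show "upd1 v0 m v = 0 \<or> upd1 v0 m w = 0" using S n by (auto simp: upd1_def)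
qed

definition shiftv :: "cpoly \<Rightarrow> cpoly" where
  "shiftv g s = (if 0 < s v0 then g (s(v0 := s v0 - 1)) else 0)"

lemma shift_delta: "shiftv (\<lambda>s. if s = x then 1 else 0) = (\<lambda>s. if s = upd1 v0 x then 1 else 0)"
proof
  fix s
  have "shiftv (\<lambda>s. if s = x then 1 else 0) s = (if 0 < s v0 \<and> s(v0 := s v0 - 1) = x then 1 else 0)"
    by (simp add: shiftv_def)
  also have "\<dots> = (if s = upd1 v0 x then 1 else 0)" by (simp only: dn_up)
  finally show "shiftv (\<lambda>s. if s = x then 1 else 0) s = (if s = upd1 v0 x then 1 else 0)" .
qed

lemma shift_gen: "shiftv (gen n r) = gen (upd1 v0 n) r"
proof
  fix s
  have e: "sh r k (upd1 v0 n) = upd1 v0 (sh r k n)" for k by (simp add: sh_def upd1_comm)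
  show "shiftv (gen n r) s = gen (upd1 v0 n) r s"
  proof (cases "0 < s v0")
    case True
    then show ?thesis unfolding shiftv_def gen_def e using dn_up[of s v0] by auto
  next
    case False
    then have "s \<noteq> upd1 v0 x" for x by (auto simp: upd1_def)
    then show ?thesis unfolding shiftv_def gen_def e using False by simp
  qed
qed

lemma shift_Jd: "f \<in> Jd d \<Longrightarrow> shiftv f \<in> Jd (d + 1)"
proof (induction f rule: Jd.induct)
  case Jd0
  have "shiftv (\<lambda>_. 0) = (\<lambda>_. 0)" by (simp add: shiftv_def fun_eq_iff)
  then show ?case by (simp add: Jd.Jd0)
next
  case (JdS f r n c)
  have "shiftv (\<lambda>m. f m + c * gen n r m) = (\<lambda>s. shiftv f s + c * gen (upd1 v0 n) r s)"
  proof
    fix s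
    have sg: "shiftv (gen n r) s = gen (upd1 v0 n) r s" using shift_gen[of n r] by simp
    show "shiftv (\<lambda>m. f m + c * gen n r m) s = shiftv f s + c * gen (upd1 v0 n) r s"
      using sg by (cases "0 < s v0") (simp_all add: shiftv_def)
  qed
  moreover have "(\<lambda>s. shiftv f s + c * gen (upd1 v0 n) r s) \<in> Jd (d + 1)"
    using JdS by (intro Jd.JdS) auto
  ultimately show ?case by simp
qed

lemma N_shift: "N (upd1 v0 m) = shiftv (N m)"
proof -
  have gm: "good \<sigma> (mdeg m) m (N m)" by (rule goodN)
  have "good \<sigma> (mdeg m + 1) (upd1 v0 m) (shiftv (N m))"
    unfolding good_def
  proof
    show "\<forall>s. shiftv (N m) s \<noteq> 0 \<longrightarrow> Std \<sigma> s \<and> mdeg s = mdeg m + 1"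
    proof (intro allI impI)
      fix s assume "shiftv (N m) s \<noteq> 0"
      then have p: "0 < s v0" "N m (s(v0 := s v0 - 1)) \<noteq> 0" by (auto simp: shiftv_def split: if_splits)
      then have "Std \<sigma> (s(v0 := s v0 - 1)) \<and> mdeg (s(v0 := s v0 - 1)) = mdeg m" using gm by (auto simp: good_def)
      moreover have "s = upd1 v0 (s(v0 := s v0 - 1))" using dn_up[of s v0] p(1) by blast
      ultimately show "Std \<sigma> s \<and> mdeg s = mdeg m + 1" using Std_up by (metis mdeg_upd1)
    qed
    have "(\<lambda>s. (if s = upd1 v0 m then 1 else 0) - shiftv (N m) s) = shiftv (\<lambda>s. (if s = m then 1 else 0) - N m s)"
    proof
      fix s
      have "shiftv (\<lambda>s. (if s = m then 1 else 0) - N m s) s = shiftv (\<lambda>s. if s = m then 1 else 0) s - shiftv (N m) s"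
        by (simp add: shiftv_def)
      then show "(if s = upd1 v0 m then 1 else 0) - shiftv (N m) s = shiftv (\<lambda>s. (if s = m then 1 else 0) - N m s) s"
        using shift_delta[of m] by simp
    qed
    moreover have "shiftv (\<lambda>s. (if s = m then 1 else 0) - N m s) \<in> Jd (mdeg m + 1)"
      using gm by (intro shift_Jd) (simp add: good_def)
    ultimately show "(\<lambda>s. (if s = upd1 v0 m then 1 else 0) - shiftv (N m) s) \<in> Jd (mdeg m + 1)" by simp
  qed
  then show ?thesis using goodN[of "upd1 v0 m"] good_unique by simp
qed

end

context full
begin

lemma main_gen:
  fixes Pt :: "mono \<Rightarrow> complex"
  assumes Pfin: "finite {m. Pt m \<noteq> 0}"
    and Prel: "\<And>n r. r < 5 \<Longrightarrow> (\<Sum>k<3. eps k * Pt (sh r k n)) = 0"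
  shows "\<exists>Qt. finite {m. Qt m \<noteq> 0} \<and> (\<forall>n r. r < 5 \<longrightarrow> (\<Sum>k<3. eps k * Qt (sh r k n)) = 0)
           \<and> (\<forall>m. Qt (upd1 v0 m) = Pt m)"
proof -
  define val where "val s = (if 0 < s v0 then Pt (s(v0 := s v0 - 1)) else 0)" for s
  define Qt where "Qt m = (\<Sum>s\<in>Sd (mdeg m). N m s * val s)" for m
  have rel: "(\<Sum>k<3. eps k * Qt (sh r k n)) = 0" if r: "r < 5" for n r
  proof -
    define d where "d = mdeg n + 2"
    define G where "G s = (\<Sum>k<3. eps k * N (sh r k n) s)" for s
    have gk: "good \<sigma> d (sh r k n) (N (sh r k n))" for k using goodN[of "sh r k n"] by (simp add: d_def)
    have "(\<lambda>s. gen n r s - (\<Sum>k<3. eps k * ((if s = sh r k n then 1 else 0) - N (sh r k n) s))) \<in> Jd d"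
    proof (rule Jd_diff)
      show "gen n r \<in> Jd d" using Jd_gen[OF r] by (simp add: d_def)
      show "(\<lambda>s. \<Sum>k<3. eps k * ((if s = sh r k n then 1 else 0) - N (sh r k n) s)) \<in> Jd d"
        using gk by (intro Jd_sum) (auto simp: good_def)
    qed
    moreover have "(\<lambda>s. gen n r s - (\<Sum>k<3. eps k * ((if s = sh r k n then 1 else 0) - N (sh r k n) s))) = G"
      unfolding G_def gen_def by (simp add: algebra_simps sum_subtractf fun_eq_iff)
    ultimately have GJ: "G \<in> Jd d" by simp
    have "G = (\<lambda>_. 0)"
    proof (rule claimB[OF GJ])
      fix s assume "G s \<noteq> 0"
      then obtain k where "eps k * N (sh r k n) s \<noteq> 0" unfolding G_def
        using sum.not_neutral_contains_not_neutral by blast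
      then show "Std \<sigma> s" using gk[of k] by (auto simp: good_def)
    qed
    then have G0: "G s = 0" for s by simp
    have "(\<Sum>k<3. eps k * Qt (sh r k n)) = (\<Sum>k<3. \<Sum>s\<in>Sd d. eps k * (N (sh r k n) s * val s))"
      unfolding Qt_def by (simp add: d_def sum_distrib_left)
    also have "\<dots> = (\<Sum>s\<in>Sd d. \<Sum>k<3. eps k * (N (sh r k n) s * val s))" by (rule sum.swap)
    also have "\<dots> = (\<Sum>s\<in>Sd d. G s * val s)"
      unfolding G_def by (simp add: sum_distrib_right mult.assoc)
    also have "\<dots> = 0" by (simp add: G0)
    finally show ?thesis .
  qed
  have sh: "Qt (upd1 v0 m) = Pt m" for m
  proof -
    define d where "d = mdeg m"
    have gm: "good \<sigma> d m (N m)" using goodN[of m] by (simp add: d_def)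
    define F where "F x = N m x * Pt x" for x
    have "Qt (upd1 v0 m) = (\<Sum>s\<in>Sd (d + 1). shiftv (N m) s * val s)"
      unfolding Qt_def by (simp add: N_shift d_def)
    also have "\<dots> = (\<Sum>s\<in>Sd (d + 1). if 0 < s v0 then F (s(v0 := s v0 - 1)) else 0)"
      by (rule sum.cong) (auto simp: shiftv_def val_def F_def)
    also have "\<dots> = (\<Sum>s\<in>upd1 v0 ` Sd d. F (s(v0 := s v0 - 1)))"
    proof (rule sum.mono_neutral_cong_right)
      show "finite (Sd (d + 1))" by (rule finite_Sd)
      show "upd1 v0 ` Sd d \<subseteq> Sd (d + 1)" by (auto simp: Sd_def)
      show "\<forall>i\<in>Sd (d + 1) - upd1 v0 ` Sd d. (if 0 < i v0 then F (i(v0 := i v0 - 1)) else 0) = 0"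
      proof
        fix i assume i: "i \<in> Sd (d + 1) - upd1 v0 ` Sd d"
        show "(if 0 < i v0 then F (i(v0 := i v0 - 1)) else 0) = 0"
        proof (cases "0 < i v0")
          case True
          then have "i = upd1 v0 (i(v0 := i v0 - 1))" using dn_up[of i v0] by blast
          moreover have "i(v0 := i v0 - 1) \<in> Sd d"
            using i \<open>i = upd1 v0 (i(v0 := i v0 - 1))\<close> mdeg_upd1[of v0 "i(v0 := i v0 - 1)"]
            by (auto simp: Sd_def)
          ultimately have False using i by blast
          then show ?thesis ..
        qed simp
      qed
      show "\<And>x. x \<in> upd1 v0 ` Sd d \<Longrightarrow> (if 0 < x v0 then F (x(v0 := x v0 - 1)) else 0) = F (x(v0 := x v0 - 1))"
        by (auto simp: upd1_def)
    qed
    also have "\<dots> = (\<Sum>x\<in>Sd d. F ((upd1 v0 x)(v0 := upd1 v0 x v0 - 1)))"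
    proof -
      have "inj_on (upd1 v0) (Sd d)" by (auto intro: inj_onI upd1_inj)
      then show ?thesis using sum.reindex[of "upd1 v0" "Sd d" "\<lambda>s. F (s(v0 := s v0 - 1))"] by (simp add: comp_def)
    qed
    also have "\<dots> = (\<Sum>x\<in>Sd d. F x)"
      by (rule sum.cong) (auto simp: upd1_def)
    also have "\<dots> = Pt m"
    proof -
      have J: "(\<lambda>s. (if s = m then 1 else 0) - N m s) \<in> Jd d" using gm by (simp add: good_def)
      have "(\<Sum>x\<in>Sd d. id ((if x = m then 1 else 0) - N m x) * Pt x) = 0"
        by (rule Jd_pair[OF _ _ _ _ _ _ J]) (auto simp: d_def Prel)
      then have "(\<Sum>x\<in>Sd d. (if x = m then Pt x else 0) - F x) = 0"
      proof -
        have "(\<Sum>x\<in>Sd d. id ((if x = m then 1 else 0) - N m x) * Pt x) = (\<Sum>x\<in>Sd d. (if x = m then Pt x else 0) - F x)"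
          by (rule sum.cong) (auto simp: F_def algebra_simps)
        with \<open>(\<Sum>x\<in>Sd d. id ((if x = m then 1 else 0) - N m x) * Pt x) = 0\<close> show ?thesis by simp
      qed
      moreover have "m \<in> Sd d" by (simp add: Sd_def d_def)
      ultimately show ?thesis by (simp add: sum_subtractf finite_Sd sum.delta)
    qed
    finally show ?thesis .
  qed
  have fin: "finite {m. Qt m \<noteq> 0}"
  proof (rule finite_subset)
    show "finite (\<Union>n\<in>{m. Pt m \<noteq> 0}. Sd (mdeg n + 1))" using Pfin finite_Sd by blast
    show "{m. Qt m \<noteq> 0} \<subseteq> (\<Union>n\<in>{m. Pt m \<noteq> 0}. Sd (mdeg n + 1))"
    proof
      fix m assume "m \<in> {m. Qt m \<noteq> 0}"
      then have "(\<Sum>s\<in>Sd (mdeg m). N m s * val s) \<noteq> 0" unfolding Qt_def by simp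
      then obtain s where s: "s \<in> Sd (mdeg m)" "N m s * val s \<noteq> 0"
        using sum.not_neutral_contains_not_neutral by blast
      then have p: "0 < s v0" "Pt (s(v0 := s v0 - 1)) \<noteq> 0" by (auto simp: val_def split: if_splits)
      have "s = upd1 v0 (s(v0 := s v0 - 1))" using dn_up[of s v0] p(1) by blast
      then have "mdeg s = mdeg (s(v0 := s v0 - 1)) + 1" using mdeg_upd1[of v0 "s(v0 := s v0 - 1)"] by simp
      then have "m \<in> Sd (mdeg (s(v0 := s v0 - 1)) + 1)" using s(1) by (simp add: Sd_def)
      then show "m \<in> (\<Union>n\<in>{m. Pt m \<noteq> 0}. Sd (mdeg n + 1))" using p(2) by blast
    qed
  qed
  show ?thesis using fin rel sh by blast
qed

end

context full
begin

lemma final: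
  assumes P: "P \<in> polys" and PR: "\<And>r. r < 5 \<Longrightarrow> opR r P = (\<lambda>_. 0)"
  shows "\<exists>Q\<in>polys. pd v0 Q = P \<and> (\<forall>r<5. opR r Q = (\<lambda>_. 0))"
proof -
  define Pt where "Pt m = P m * fct m" for m
  have "{m. Pt m \<noteq> 0} = {m. P m \<noteq> 0}" by (auto simp: Pt_def fct_nz)
  then have Pfin: "finite {m. Pt m \<noteq> 0}" using P by (simp add: polys_def)
  have Prel: "(\<Sum>k<3. eps k * Pt (sh r k n)) = 0" if "r < 5" for n r
    using scaled_rel[OF that, of P n] PR[OF that] by (simp add: Pt_def)
  obtain Qt where Q1: "finite {m. Qt m \<noteq> 0}" and Q2: "\<And>n r. r < 5 \<Longrightarrow> (\<Sum>k<3. eps k * Qt (sh r k n)) = 0"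
    and Q3: "\<And>m. Qt (upd1 v0 m) = Pt m"
    using main_gen[OF Pfin Prel] by blast
  define Q where "Q m = Qt m / fct m" for m
  have "{m. Q m \<noteq> 0} = {m. Qt m \<noteq> 0}" by (auto simp: Q_def fct_nz)
  then have QP: "Q \<in> polys" using Q1 by (simp add: polys_def)
  have pdQ: "pd v0 Q = P"
  proof
    fix m
    have "pd v0 Q m = of_nat (m v0 + 1) * Q (upd1 v0 m)" by (simp add: pd_def upd1_def)
    also have "\<dots> = of_nat (m v0 + 1) * (P m * fct m) / (fct m * of_nat (m v0 + 1))"
      by (simp add: Q_def Q3 fct_upd1 Pt_def)
    also have "\<dots> = P m" using fct_nz[of m] by (simp del: of_nat_Suc)
    finally show "pd v0 Q m = P m" .
  qed
  have opQ: "opR r Q = (\<lambda>_. 0)" if r: "r < 5" for r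
  proof
    fix n
    have "fct n * opR r Q n = (\<Sum>k<3. eps k * (Q (sh r k n) * fct (sh r k n)))"
      using scaled_rel[OF r, of Q n] by simp
    also have "\<dots> = (\<Sum>k<3. eps k * Qt (sh r k n))"
      by (simp add: Q_def fct_nz)
    also have "\<dots> = 0" using Q2[OF r] .
    finally show "opR r Q n = 0" using fct_nz[of n] by simp
  qed
  show ?thesis using QP pdQ opQ by blast
qed

end

lemma ex5: "(\<exists>r<5. P r) = (P 0 \<or> P 1 \<or> P 2 \<or> P (3::nat) \<or> P 4)"
  by (auto simp: less_Suc_eq numeral_eq_Suc)

lemma all5: "(\<forall>r<5. P r) = (P 0 \<and> P 1 \<and> P 2 \<and> P (3::nat) \<and> P 4)"
  by (auto simp: less_Suc_eq numeral_eq_Suc)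

lemma all3: "(\<forall>r<3. P r) = (P 0 \<and> P 1 \<and> P (2::nat))"
  by (auto simp: less_Suc_eq numeral_eq_Suc)

definition sg1 :: "nat \<Rightarrow> nat" where "sg1 i = [0,0,2,3,1,4] ! i"
definition sg2 :: "nat \<Rightarrow> nat" where "sg2 i = [0,2,0,3,1,4] ! i"
definition sg3 :: "nat \<Rightarrow> nat" where "sg3 i = [0,2,3,0,1,4] ! i"
definition kp1 :: "nat \<Rightarrow> nat" where "kp1 r = [1,0,2,2,2] ! r"
definition kp2 :: "nat \<Rightarrow> nat" where "kp2 r = [2,2,0,1,1] ! r"
definition kp3 :: "nat \<Rightarrow> nat" where "kp3 r = [2,1,1,0,0] ! r"

lemmas case_simps = lo_def hi_def ni_def nj_def sg1_def sg2_def sg3_def kp1_def kp2_def kp3_def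
  fa_def fb_def cc_def

lemma full3: "full sg3 kp3 X34"
proof
  fix v show "lo sg3 v < hi sg3 v" by (cases v) (simp_all add: case_simps)
next
  fix v show "hi sg3 v < 5" by (cases v) (simp_all add: case_simps)
next
  fix v w show "lo sg3 v = lo sg3 w \<Longrightarrow> hi sg3 v = hi sg3 w \<Longrightarrow> v = w"
    by (cases v; cases w) (simp_all add: case_simps)
next
  fix v w show "lo sg3 v < lo sg3 w \<Longrightarrow> hi sg3 w < hi sg3 v \<Longrightarrow>
       \<exists>r<5. (fa r (kp3 r) = v \<and> fb r (kp3 r) = w) \<or> (fa r (kp3 r) = w \<and> fb r (kp3 r) = v)"
    unfolding ex5 by (cases v; cases w) (simp_all add: case_simps)
next
  fix r j :: nat
  assume "r < 5" "j < 3" "j \<noteq> kp3 r"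
  then show "cc sg3 (fa r j) + cc sg3 (fb r j) < cc sg3 (fa r (kp3 r)) + cc sg3 (fb r (kp3 r))"
    by (auto simp: less_Suc_eq numeral_eq_Suc case_simps)
next
  fix r :: nat assume "r < 5" then show "kp3 r < 3" by (auto simp: less_Suc_eq numeral_eq_Suc kp3_def)
qed (simp_all add: case_simps)


lemma full1: "full sg1 kp1 X14"
proof
  fix v show "lo sg1 v < hi sg1 v" by (cases v) (simp_all add: case_simps)
next
  fix v show "hi sg1 v < 5" by (cases v) (simp_all add: case_simps)
next
  fix v w show "lo sg1 v = lo sg1 w \<Longrightarrow> hi sg1 v = hi sg1 w \<Longrightarrow> v = w"
    by (cases v; cases w) (simp_all add: case_simps)
next
  fix v w show "lo sg1 v < lo sg1 w \<Longrightarrow> hi sg1 w < hi sg1 v \<Longrightarrow>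
       \<exists>r<5. (fa r (kp1 r) = v \<and> fb r (kp1 r) = w) \<or> (fa r (kp1 r) = w \<and> fb r (kp1 r) = v)"
    unfolding ex5 by (cases v; cases w) (simp_all add: case_simps)
next
  fix r j :: nat
  assume "r < 5" "j < 3" "j \<noteq> kp1 r"
  then show "cc sg1 (fa r j) + cc sg1 (fb r j) < cc sg1 (fa r (kp1 r)) + cc sg1 (fb r (kp1 r))"
    by (auto simp: less_Suc_eq numeral_eq_Suc case_simps)
next
  fix r :: nat assume "r < 5" then show "kp1 r < 3" by (auto simp: less_Suc_eq numeral_eq_Suc kp1_def)
qed (simp_all add: case_simps)


lemma full2: "full sg2 kp2 X24"
proof
  fix v show "lo sg2 v < hi sg2 v" by (cases v) (simp_all add: case_simps)
next
  fix v show "hi sg2 v < 5" by (cases v) (simp_all add: case_simps)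
next
  fix v w show "lo sg2 v = lo sg2 w \<Longrightarrow> hi sg2 v = hi sg2 w \<Longrightarrow> v = w"
    by (cases v; cases w) (simp_all add: case_simps)
next
  fix v w show "lo sg2 v < lo sg2 w \<Longrightarrow> hi sg2 w < hi sg2 v \<Longrightarrow>
       \<exists>r<5. (fa r (kp2 r) = v \<and> fb r (kp2 r) = w) \<or> (fa r (kp2 r) = w \<and> fb r (kp2 r) = v)"
    unfolding ex5 by (cases v; cases w) (simp_all add: case_simps)
next
  fix r j :: nat
  assume "r < 5" "j < 3" "j \<noteq> kp2 r"
  then show "cc sg2 (fa r j) + cc sg2 (fb r j) < cc sg2 (fa r (kp2 r)) + cc sg2 (fb r (kp2 r))"
    by (auto simp: less_Suc_eq numeral_eq_Suc case_simps)
next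
  fix r :: nat assume "r < 5" then show "kp2 r < 3" by (auto simp: less_Suc_eq numeral_eq_Suc kp2_def)
qed (simp_all add: case_simps)


theorem mainTheorem7:
  fixes s :: nat and P :: cpoly
  assumes "s \<in> {1, 2, 3}"
    and "P \<in> polys"
    and "opD P = (\<lambda>_. 0)" and "opD1 P = (\<lambda>_. 0)" and "opD2 P = (\<lambda>_. 0)"
    and "opD3 P = (\<lambda>_. 0)" and "opD4 P = (\<lambda>_. 0)"
  shows "\<exists>Q \<in> polys. pd (var_s4 s) Q = P \<and>
           opD Q = (\<lambda>_. 0) \<and> opD1 Q = (\<lambda>_. 0) \<and> opD2 Q = (\<lambda>_. 0) \<and>
           opD3 Q = (\<lambda>_. 0) \<and> opD4 Q = (\<lambda>_. 0)"
proof -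
  have PR: "\<And>r. r < 5 \<Longrightarrow> opR r P = (\<lambda>_. 0)"
    using assms(3-7) by (auto simp: opR_def)
  have "\<exists>Q\<in>polys. pd (var_s4 s) Q = P \<and> (\<forall>r<5. opR r Q = (\<lambda>_. 0))"
  proof -
    have "s = 1 \<or> s = 2 \<or> s = 3" using assms(1) by auto
    then show ?thesis
    proof (elim disjE)
      assume "s = 1"
      then show ?thesis using full.final[OF full1 assms(2) PR] by (simp add: var_s4_def)
    next
      assume "s = 2"
      then show ?thesis using full.final[OF full2 assms(2) PR] by (simp add: var_s4_def)
    next
      assume "s = 3"
      then show ?thesis using full.final[OF full3 assms(2) PR] by (simp add: var_s4_def)
    qed
  qed
  then obtain Q where "Q \<in> polys" "pd (var_s4 s) Q = P" "\<And>r. r < 5 \<Longrightarrow> opR r Q = (\<lambda>_. 0)"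
    by blast
  moreover have "opD Q = opR 0 Q" "opD1 Q = opR 1 Q" "opD2 Q = opR 2 Q" "opD3 Q = opR 3 Q" "opD4 Q = opR 4 Q"
    by (simp_all add: opR_def)
  ultimately show ?thesis by auto
qed

end
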